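(* Let $\mathcal G$ be a simple connected graph and $\gamma\in\Gamma$. Then the orientations of the edges of $\mathcal G$ can be chosen so that $Vd\ge0$ (componentwise) for all $\varepsilon\ge0$ sufficiently small, where $d=e_1+\varepsilon\gamma$ and $V$ is the PTDF matrix for that orientation.
   Context: $\mathcal G=(\mathcal N,\mathcal E)$ has nodes $\{1,\dots,n\}$ and edges $\{1,\dots,m\}$, each with an orientation. $C\in\mathbb R^{m\times n}$ is the incidence matrix ($C_{e,i}=1$ if $e$ enters $i$, $-1$ if $e$ leaves $i$, $0$ otherwise) and the PTDF matrix is $V=C(C^TC)^+$ ($^+$ = Moore–Penrose pseudoinverse); reversing the orientation of an edge flips the sign of its row of $V$. $e_1$ is the first unit vector and $\Gamma=\{\gamma\in\mathbb R^n:\gamma_1=0,\gamma\ge0,\sum_i\gamma_i=1\}$. *)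

theory Defs
  imports "Jordan_Normal_Form.Matrix"
begin

text \<open>Nodes are 0,...,n-1 (paper's node i is index i-1; the paper's node 1 is index 0).
  An oriented graph is a list of edges (u,v), meaning the edge leaves u and enters v;
  the paper's edge k is list position k-1.\<close>

definition simple_graph :: "nat \<Rightarrow> (nat \<times> nat) list \<Rightarrow> bool" where
  "simple_graph n es \<longleftrightarrow>
     (\<forall>k<length es. fst (es!k) < n \<and> snd (es!k) < n \<and> fst (es!k) \<noteq> snd (es!k)) \<and>
     (\<forall>k<length es. \<forall>l<length es. k \<noteq> l \<longrightarrow>
        {fst (es!k), snd (es!k)} \<noteq> {fst (es!l), snd (es!l)})"

definition adjacency :: "(nat \<times> nat) list \<Rightarrow> (nat \<times> nat) set" where
  "adjacency es = set es \<union> prod.swap ` set es"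

definition connected_graph :: "nat \<Rightarrow> (nat \<times> nat) list \<Rightarrow> bool" where
  "connected_graph n es \<longleftrightarrow> (\<forall>i<n. \<forall>j<n. (i, j) \<in> (adjacency es)\<^sup>*)"

definition is_orientation_of :: "(nat \<times> nat) list \<Rightarrow> (nat \<times> nat) list \<Rightarrow> bool" where
  "is_orientation_of es' es \<longleftrightarrow> length es' = length es \<and>
     (\<forall>k<length es. es'!k = es!k \<or> es'!k = prod.swap (es!k))"

definition incidence :: "nat \<Rightarrow> (nat \<times> nat) list \<Rightarrow> real mat" where
  "incidence n es = mat (length es) n
     (\<lambda>(e, i). if snd (es!e) = i then 1 else if fst (es!e) = i then -1 else 0)"

definition pinv :: "real mat \<Rightarrow> real mat" where
  "pinv A = (THE X. X \<in> carrier_mat (dim_col A) (dim_row A) \<and>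
       A * X * A = A \<and> X * A * X = X \<and>
       transpose_mat (A * X) = A * X \<and> transpose_mat (X * A) = X * A)"

definition ptdf :: "nat \<Rightarrow> (nat \<times> nat) list \<Rightarrow> real mat" where
  "ptdf n es = (let C = incidence n es in C * pinv (transpose_mat C * C))"

definition Gamma :: "nat \<Rightarrow> real vec set" where
  "Gamma n = {\<gamma>. \<gamma> \<in> carrier_vec n \<and> \<gamma> $ 0 = 0 \<and> (\<forall>i<n. \<gamma> $ i \<ge> 0) \<and>
                 (\<Sum>i<n. \<gamma> $ i) = 1}"

end

theory Submission imports Defs "Jordan_Normal_Form.Determinant" begin

lemma mp_unique:
  fixes A X Y :: "real mat"
  assumes A: "A \<in> carrier_mat n n" and X: "X \<in> carrier_mat n n" and Y: "Y \<in> carrier_mat n n"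
  and x1: "A * X * A = A" and x2: "X * A * X = X" and x3: "transpose_mat (A * X) = A * X"
  and x4: "transpose_mat (X * A) = X * A"
  and y1: "A * Y * A = A" and y2: "Y * A * Y = Y" and y3: "transpose_mat (A * Y) = A * Y"
  and y4: "transpose_mat (Y * A) = Y * A"
  shows "X = Y"
proof -
  note c = A X Y transpose_carrier_mat[THEN iffD2, OF A] transpose_carrier_mat[THEN iffD2, OF X] transpose_carrier_mat[THEN iffD2, OF Y]
  have tA1: "transpose_mat A = transpose_mat A * (A * Y)"
  proof -
    have "transpose_mat A = transpose_mat ((A * Y) * A)" using y1 by simp
    also have "\<dots> = transpose_mat A * transpose_mat (A * Y)"
      by (rule transpose_mult[of _ n n], insert c, auto)
    finally show ?thesis using y3 by simp
  qed
  have tA2: "transpose_mat A = (X * A) * transpose_mat A"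
  proof -
    have "transpose_mat A = transpose_mat (A * (X * A))" using x1 c by simp
    also have "\<dots> = transpose_mat (X * A) * transpose_mat A"
      by (rule transpose_mult[of _ n n], insert c, auto)
    finally show ?thesis using x4 by simp
  qed
  have "X = X * (A * X)" using x2 c by simp
  also have "\<dots> = X * (transpose_mat X * transpose_mat A)"
    using x3 transpose_mult[OF A X] by metis
  also have "\<dots> = X * (transpose_mat X * (transpose_mat A * (A * Y)))" using tA1 by simp
  also have "\<dots> = X * ((transpose_mat X * transpose_mat A) * (A * Y))" using c by (simp add: assoc_mult_mat[of _ n n _ n _ n])
  also have "\<dots> = X * ((A * X) * (A * Y))" using x3 transpose_mult[OF A X] by metis
  also have "\<dots> = (X * A * X) * (A * Y)" using c by (simp add: assoc_mult_mat[of _ n n _ n _ n])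
  also have "\<dots> = X * A * Y" using x2 c by simp
  finally have 1: "X = X * A * Y" .
  have "Y = (Y * A) * Y" using y2 by simp
  also have "\<dots> = (transpose_mat A * transpose_mat Y) * Y"
    using y4 transpose_mult[OF Y A] by metis
  also have "\<dots> = (((X * A) * transpose_mat A) * transpose_mat Y) * Y" using tA2 by simp
  also have "\<dots> = (X * A) * ((transpose_mat A * transpose_mat Y) * Y)" using c by (simp add: assoc_mult_mat[of _ n n _ n _ n])
  also have "\<dots> = (X * A) * ((Y * A) * Y)" using y4 transpose_mult[OF Y A] by metis
  also have "\<dots> = X * A * Y" using y2 c by simp
  finally show ?thesis using 1 by simp
qed


lemma inc_carrier: "incidence n es \<in> carrier_mat (length es) n"
  by (simp add: incidence_def)

lemma inc_idx: "e < length es \<Longrightarrow> i < n \<Longrightarrow> incidence n es $$ (e,i) =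
   (if snd (es!e) = i then 1 else if fst (es!e) = i then -1 else 0)"
  by (simp add: incidence_def)

lemma simple_edge: "simple_graph n es \<Longrightarrow> e < length es \<Longrightarrow>
   fst (es!e) < n \<and> snd (es!e) < n \<and> fst (es!e) \<noteq> snd (es!e)"
  unfolding simple_graph_def by blast

lemma inc_row_scalar:
  assumes s: "simple_graph n es" and e: "e < length es" and v: "v \<in> carrier_vec n"
  shows "row (incidence n es) e \<bullet> v = v $ snd (es!e) - v $ fst (es!e)"
proof -
  obtain a b where ab: "es!e = (a,b)" by force
  have a: "a < n" "b < n" "a \<noteq> b" using simple_edge[OF s e] ab by auto
  have "row (incidence n es) e \<bullet> v = (\<Sum>i\<in>{0..<n}. incidence n es $$ (e,i) * v $ i)"
    unfolding scalar_prod_def using v e inc_carrier[of n es] by auto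
  also have "\<dots> = (\<Sum>i\<in>{0..<n}. (if i = b then v $ i else 0) - (if i = a then v $ i else 0))"
    by (rule sum.cong) (use a in \<open>auto simp: inc_idx[OF e] ab\<close>)
  also have "\<dots> = v $ b - v $ a" using a by (simp add: sum_subtractf)
  finally show ?thesis using ab by simp
qed

lemma inc_mult_vec:
  assumes s: "simple_graph n es" and e: "e < length es" and v: "v \<in> carrier_vec n"
  shows "(incidence n es *\<^sub>v v) $ e = v $ snd (es!e) - v $ fst (es!e)"
  using inc_row_scalar[OF assms] e inc_carrier[of n es] by simp

definition Jm :: "nat \<Rightarrow> real mat" where "Jm n = mat n n (\<lambda>_. 1 / real n)"

lemma Jm_carrier[simp]: "Jm n \<in> carrier_mat n n" by (simp add: Jm_def)

lemma Jm_sq: assumes "n > 0" shows "Jm n * Jm n = Jm n"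
proof (rule eq_matI)
  fix i j assume "i < dim_row (Jm n)" "j < dim_col (Jm n)"
  then have ij: "i < n" "j < n" by (auto simp: Jm_def)
  have "(Jm n * Jm n) $$ (i,j) = (\<Sum>k\<in>{0..<n}. (1/real n) * (1/real n))"
    using ij by (auto simp: Jm_def scalar_prod_def)
  also have "\<dots> = 1 / real n" using assms by (simp add: power2_eq_square)
  finally show "(Jm n * Jm n) $$ (i,j) = Jm n $$ (i,j)" using ij by (simp add: Jm_def)
qed (auto simp: Jm_def)

lemma Jm_sym: "transpose_mat (Jm n) = Jm n"
  by (rule eq_matI, auto simp: Jm_def)


definition lap :: "nat \<Rightarrow> (nat \<times> nat) list \<Rightarrow> real mat" where
  "lap n es = transpose_mat (incidence n es) * incidence n es"

lemma lap_carrier[simp]: "lap n es \<in> carrier_mat n n"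
  using inc_carrier[of n es] by (auto simp: lap_def)

lemma lap_dims[simp]: "dim_row (lap n es) = n" "dim_col (lap n es) = n"
  using lap_carrier[of n es] unfolding carrier_mat_def by auto

lemma lap_sym: "transpose_mat (lap n es) = lap n es"
  unfolding lap_def
  by (subst transpose_mult[of _ n "length es" _ n], insert inc_carrier[of n es], auto)

lemma inc_ones: assumes s: "simple_graph n es"
  shows "incidence n es *\<^sub>v vec n (\<lambda>_. 1) = 0\<^sub>v (length es)"
  by (rule eq_vecI, insert inc_carrier[of n es], auto simp: inc_row_scalar[OF s] simple_edge[OF s])

lemma lap_ones: assumes s: "simple_graph n es"
  shows "lap n es *\<^sub>v vec n (\<lambda>_. 1) = 0\<^sub>v n"
proof -
  have C: "incidence n es \<in> carrier_mat (length es) n" by (rule inc_carrier)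
  have "lap n es *\<^sub>v vec n (\<lambda>_. 1) = transpose_mat (incidence n es) *\<^sub>v (incidence n es *\<^sub>v vec n (\<lambda>_. 1))"
    unfolding lap_def by (rule assoc_mult_mat_vec[of _ n "length es" _ n], insert C, auto)
  also have "\<dots> = transpose_mat (incidence n es) *\<^sub>v 0\<^sub>v (length es)" using inc_ones[OF s] by simp
  also have "\<dots> = 0\<^sub>v n" by (rule eq_vecI, insert C, auto)
  finally show ?thesis .
qed

lemma lap_J: assumes s: "simple_graph n es"
  shows "lap n es * Jm n = 0\<^sub>m n n"
proof (rule eq_matI)
  fix i j assume ij: "i < dim_row (0\<^sub>m n n :: real mat)" "j < dim_col (0\<^sub>m n n :: real mat)"
  then have ij: "i < n" "j < n" by auto
  have L: "lap n es \<in> carrier_mat n n" by simp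
  have "(lap n es * Jm n) $$ (i,j) = (\<Sum>k\<in>{0..<n}. lap n es $$ (i,k) * (1 / real n))"
    using ij L by (auto simp: Jm_def scalar_prod_def)
  also have "\<dots> = (1 / real n) * (\<Sum>k\<in>{0..<n}. lap n es $$ (i,k) * 1)"
    by (simp add: sum_distrib_left mult.commute)
  also have "(\<Sum>k\<in>{0..<n}. lap n es $$ (i,k) * 1) = (lap n es *\<^sub>v vec n (\<lambda>_. 1)) $ i"
    using ij L by (auto simp: scalar_prod_def)
  also have "\<dots> = 0" using lap_ones[OF s] ij by simp
  finally show "(lap n es * Jm n) $$ (i,j) = 0\<^sub>m n n $$ (i,j)" using ij by simp
qed (auto simp: Jm_def)

lemma J_lap: assumes s: "simple_graph n es"
  shows "Jm n * lap n es = 0\<^sub>m n n"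
proof -
  have "Jm n * lap n es = transpose_mat (lap n es * Jm n)"
    by (subst transpose_mult[of _ n n _ n], auto simp: lap_sym Jm_sym)
  also have "\<dots> = 0\<^sub>m n n" using lap_J[OF s] by simp
  finally show ?thesis .
qed


lemma kernel_zero:
  assumes s: "simple_graph n es" and c: "connected_graph n es" and n: "n > 0"
    and v: "v \<in> carrier_vec n" and Mv: "(lap n es + Jm n) *\<^sub>v v = 0\<^sub>v n"
  shows "v = 0\<^sub>v n"
proof -
  define C where "C = incidence n es"
  define L where "L = lap n es"
  define Q where "Q = Jm n"
  have Cc: "C \<in> carrier_mat (length es) n" unfolding C_def by (rule inc_carrier)
  have Lc: "L \<in> carrier_mat n n" unfolding L_def by simp
  have Qc: "Q \<in> carrier_mat n n" unfolding Q_def by simp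
  have QM: "Q * (L + Q) = Q"
    using mult_add_distrib_mat[OF Qc Lc Qc] J_lap[OF s] Jm_sq[OF n] Qc
    unfolding L_def Q_def by simp
  have Qv: "Q *\<^sub>v v = 0\<^sub>v n"
  proof -
    have "Q *\<^sub>v v = (Q * (L + Q)) *\<^sub>v v" using QM by simp
    also have "\<dots> = Q *\<^sub>v ((L + Q) *\<^sub>v v)" using Qc Lc v by (subst assoc_mult_mat_vec[of _ n n _ n]) auto
    also have "\<dots> = Q *\<^sub>v 0\<^sub>v n" using Mv unfolding L_def Q_def by simp
    also have "\<dots> = 0\<^sub>v n" by (rule eq_vecI, insert Qc, auto)
    finally show ?thesis .
  qed
  have Lv: "L *\<^sub>v v = 0\<^sub>v n"
  proof -
    have "(L + Q) *\<^sub>v v = L *\<^sub>v v + Q *\<^sub>v v" by (rule add_mult_distrib_mat_vec[OF Lc Qc v])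
    then have "L *\<^sub>v v + 0\<^sub>v n = 0\<^sub>v n" using Mv Qv unfolding L_def Q_def by simp
    moreover have "L *\<^sub>v v \<in> carrier_vec n" using Lc v by (rule mult_mat_vec_carrier)
    ultimately show ?thesis by simp
  qed
  define w where "w = C *\<^sub>v v"
  have wc: "w \<in> carrier_vec (length es)" unfolding w_def using Cc v by simp
  have "w \<bullet> w = (transpose_mat C *\<^sub>v w) \<bullet> v"
    using transpose_vec_mult_scalar[OF Cc v wc] unfolding w_def by simp
  also have "transpose_mat C *\<^sub>v w = L *\<^sub>v v"
    unfolding w_def L_def lap_def C_def[symmetric]
    by (rule assoc_mult_mat_vec[symmetric, of _ n "length es" _ n], insert Cc v, auto)
  also have "\<dots> \<bullet> v = 0" using Lv v by simp
  finally have ww: "w \<bullet> w = 0" .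
  have w0: "w $ e = 0" if e: "e < length es" for e
  proof -
    have "(\<Sum>i\<in>{0..<length es}. w $ i * w $ i) = 0" using ww wc unfolding scalar_prod_def by simp
    then have "\<forall>i\<in>{0..<length es}. w $ i * w $ i = 0"
      by (subst sum_nonneg_eq_0_iff[symmetric]) auto
    then show ?thesis using e by auto
  qed
  have edge: "v $ a = v $ b" if ab: "(a,b) \<in> adjacency es" for a b
  proof -
    have "\<exists>e<length es. es!e = (a,b) \<or> es!e = (b,a)"
      using ab unfolding adjacency_def by (auto simp: in_set_conv_nth)
    then obtain e where e: "e < length es" and ee: "es!e = (a,b) \<or> es!e = (b,a)" by blast
    have "w $ e = v $ snd (es!e) - v $ fst (es!e)"
      unfolding w_def C_def by (rule inc_mult_vec[OF s e v])
    then show ?thesis using w0[OF e] ee by auto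
  qed
  have path: "v $ a = v $ b" if "(a,b) \<in> (adjacency es)\<^sup>*" for a b
    using that
  proof (induction rule: rtrancl_induct)
    case (step y z)
    then show ?case using edge[of y z] by simp
  qed simp
  define c0 where "c0 = v $ 0"
  have all: "v $ i = c0" if "i < n" for i
  proof -
    have "(0, i) \<in> (adjacency es)\<^sup>*" using c n that unfolding connected_graph_def by simp
    from path[OF this] show ?thesis unfolding c0_def by simp
  qed
  have "(Q *\<^sub>v v) $ 0 = (\<Sum>k\<in>{0..<n}. (1 / real n) * v $ k)"
    using n Qc v by (auto simp: Q_def Jm_def scalar_prod_def)
  also have "\<dots> = (\<Sum>k\<in>{0..<n}. (1 / real n) * c0)" by (rule sum.cong, auto simp: all)
  also have "\<dots> = c0" using n by simp
  finally have "c0 = 0" using Qv n by simp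
  then show ?thesis using all v by (intro eq_vecI) auto
qed


lemma mat_cancel: fixes A B D :: "real mat"
  assumes "A \<in> carrier_mat n n" "B \<in> carrier_mat n n" "D \<in> carrier_mat n n" "A + B = D"
  shows "A = D - B"
proof (rule eq_matI)
  fix i j assume ij: "i < dim_row (D - B)" "j < dim_col (D - B)"
  then have ij': "i < n" "j < n" using assms by auto
  have "(A + B) $$ (i,j) = D $$ (i,j)" using assms by simp
  then show "A $$ (i,j) = (D - B) $$ (i,j)" using ij' assms by auto
qed (use assms in auto)

lemma mat_minus_zero: fixes A :: "real mat"
  assumes "A \<in> carrier_mat n n" shows "A - 0\<^sub>m n n = A" "A - A = 0\<^sub>m n n"
  by (rule eq_matI, use assms in auto)+

lemma lap_pinv_exists:
  assumes s: "simple_graph n es" and c: "connected_graph n es" and n: "n > 0"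
  shows "\<exists>X. X \<in> carrier_mat n n \<and> lap n es * X * lap n es = lap n es \<and>
     X * lap n es * X = X \<and> transpose_mat (lap n es * X) = lap n es * X \<and>
     transpose_mat (X * lap n es) = X * lap n es"
proof -
  define L where "L = lap n es"
  define Q where "Q = Jm n"
  define M where "M = L + Q"
  have Lc: "L \<in> carrier_mat n n" unfolding L_def by simp
  have Qc: "Q \<in> carrier_mat n n" unfolding Q_def by simp
  have Mc: "M \<in> carrier_mat n n" unfolding M_def using Lc Qc by simp
  have LQ: "L * Q = 0\<^sub>m n n" unfolding L_def Q_def by (rule lap_J[OF s])
  have QL: "Q * L = 0\<^sub>m n n" unfolding L_def Q_def by (rule J_lap[OF s])
  have QQ: "Q * Q = Q" unfolding Q_def by (rule Jm_sq[OF n])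
  have "det M \<noteq> 0"
  proof
    assume "det M = 0"
    then obtain v where v: "v \<in> carrier_vec n" "v \<noteq> 0\<^sub>v n" "M *\<^sub>v v = 0\<^sub>v n"
      using det_0_iff_vec_prod_zero_field[OF Mc] by blast
    have "v = 0\<^sub>v n" using kernel_zero[OF s c n v(1)] v(3) unfolding M_def L_def Q_def by simp
    then show False using v(2) by simp
  qed
  from det_non_zero_imp_unit[OF Mc this, of "()"]
  obtain B where Bc: "B \<in> carrier_mat n n" and BM: "B * M = 1\<^sub>m n" and MB: "M * B = 1\<^sub>m n"
    unfolding Units_def ring_mat_def by auto
  have MQ: "M * Q = Q" unfolding M_def
    using add_mult_distrib_mat[OF Lc Qc Qc] LQ QQ Qc by simp
  have QM: "Q * M = Q" unfolding M_def
    using mult_add_distrib_mat[OF Qc Lc Qc] QL QQ Qc by simp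
  have BQ: "B * Q = Q"
  proof -
    have "B * Q = B * (M * Q)" using MQ by simp
    also have "\<dots> = (B * M) * Q" using Bc Mc Qc by simp
    finally show ?thesis using BM Qc by simp
  qed
  have QB: "Q * B = Q"
  proof -
    have "Q * B = (Q * M) * B" using QM by simp
    also have "\<dots> = Q * (M * B)" using Bc Mc Qc by simp
    finally show ?thesis using MB Qc by simp
  qed
  have LB: "L * B = 1\<^sub>m n - Q"
  proof -
    have "L * B + Q * B = 1\<^sub>m n" using MB add_mult_distrib_mat[OF Lc Qc Bc] unfolding M_def by simp
    then have "L * B + Q = 1\<^sub>m n" using QB by simp
    then show ?thesis using mat_cancel[of "L * B" n Q "1\<^sub>m n"] Lc Bc Qc by simp
  qed
  have BL: "B * L = 1\<^sub>m n - Q"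
  proof -
    have "B * L + B * Q = 1\<^sub>m n" using BM mult_add_distrib_mat[OF Bc Lc Qc] unfolding M_def by simp
    then have "B * L + Q = 1\<^sub>m n" using BQ by simp
    then show ?thesis using mat_cancel[of "B * L" n Q "1\<^sub>m n"] Lc Bc Qc by simp
  qed
  define X where "X = B - Q"
  have Xc: "X \<in> carrier_mat n n" unfolding X_def using Bc Qc by (simp add: minus_carrier_mat)
  have IQc: "1\<^sub>m n - Q \<in> carrier_mat n n" using Qc by (simp add: minus_carrier_mat)
  have LX: "L * X = 1\<^sub>m n - Q"
    unfolding X_def using mult_minus_distrib_mat[OF Lc Bc Qc] LB LQ mat_minus_zero(1)[OF IQc] by simp
  have XL: "X * L = 1\<^sub>m n - Q"
    unfolding X_def using minus_mult_distrib_mat[OF Bc Qc Lc] BL QL mat_minus_zero(1)[OF IQc] by simp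
  have symIQ: "transpose_mat (1\<^sub>m n - Q) = 1\<^sub>m n - Q"
    using transpose_minus[OF one_carrier_mat Qc] Jm_sym unfolding Q_def by simp
  have 1: "L * X * L = L"
  proof -
    have "L * X * L = (1\<^sub>m n - Q) * L" using LX by simp
    also have "\<dots> = 1\<^sub>m n * L - Q * L" using minus_mult_distrib_mat[OF one_carrier_mat Qc Lc] .
    also have "\<dots> = L" using QL Lc mat_minus_zero(1)[OF Lc] by simp
    finally show ?thesis .
  qed
  have 2: "X * L * X = X"
  proof -
    have "X * L * X = (1\<^sub>m n - Q) * (B - Q)" using XL unfolding X_def by simp
    also have "\<dots> = 1\<^sub>m n * (B - Q) - Q * (B - Q)"
      using minus_mult_distrib_mat[OF one_carrier_mat Qc Xc[unfolded X_def]] .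
    also have "Q * (B - Q) = Q * B - Q * Q" using mult_minus_distrib_mat[OF Qc Bc Qc] .
    also have "\<dots> = 0\<^sub>m n n" using QB QQ mat_minus_zero(2)[OF Qc] by simp
    also have "1\<^sub>m n * (B - Q) - 0\<^sub>m n n = B - Q"
      using mat_minus_zero(1)[OF Xc[unfolded X_def]] left_mult_one_mat[OF Xc[unfolded X_def]] by simp
    finally show ?thesis unfolding X_def .
  qed
  show ?thesis unfolding L_def[symmetric]
    using Xc 1 2 LX XL symIQ by (intro exI[of _ X]) simp
qed

lemma lap_pinv_carrier:
  assumes s: "simple_graph n es" and c: "connected_graph n es" and n: "n > 0"
  shows "pinv (lap n es) \<in> carrier_mat n n"
proof -
  obtain X where X: "X \<in> carrier_mat n n" "lap n es * X * lap n es = lap n es"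
     "X * lap n es * X = X" "transpose_mat (lap n es * X) = lap n es * X"
     "transpose_mat (X * lap n es) = X * lap n es"
    using lap_pinv_exists[OF s c n] by blast
  have "pinv (lap n es) = X"
    unfolding pinv_def
  proof (rule the_equality)
    show "X \<in> carrier_mat (dim_col (lap n es)) (dim_row (lap n es)) \<and>
      lap n es * X * lap n es = lap n es \<and> X * lap n es * X = X \<and>
      transpose_mat (lap n es * X) = lap n es * X \<and> transpose_mat (X * lap n es) = X * lap n es"
      using X by simp
  next
    fix Y assume Y: "Y \<in> carrier_mat (dim_col (lap n es)) (dim_row (lap n es)) \<and>
      lap n es * Y * lap n es = lap n es \<and> Y * lap n es * Y = Y \<and>
      transpose_mat (lap n es * Y) = lap n es * Y \<and> transpose_mat (Y * lap n es) = Y * lap n es"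
    show "Y = X" using Y X by (intro mp_unique[of "lap n es" n Y X]) auto
  qed
  then show ?thesis using X by simp
qed


lemma orient_entry:
  assumes s: "simple_graph n es" and o: "is_orientation_of es' es" and e: "e < length es" and i: "i < n"
  shows "incidence n es' $$ (e,i) = (if es'!e = es!e then 1 else -1) * incidence n es $$ (e,i)"
proof -
  have len: "length es' = length es" using o unfolding is_orientation_of_def by simp
  obtain a b where ab: "es!e = (a,b)" by force
  have ne: "a \<noteq> b" using simple_edge[OF s e] ab by auto
  have "es'!e = es!e \<or> es'!e = prod.swap (es!e)" using o e unfolding is_orientation_of_def by simp
  then show ?thesis
  proof
    assume "es'!e = es!e" then show ?thesis using inc_idx[OF e i] inc_idx[of e es' i n] e i len by simp
  next
    assume h: "es'!e = prod.swap (es!e)"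
    then have h2: "es'!e = (b,a)" "es'!e \<noteq> es!e" using ab ne by auto
    show ?thesis using inc_idx[OF e i] inc_idx[of e es' i n] e i len ab ne h2 by auto
  qed
qed

lemma orient_lap:
  assumes s: "simple_graph n es" and o: "is_orientation_of es' es"
  shows "lap n es' = lap n es"
proof -
  have len: "length es' = length es" using o unfolding is_orientation_of_def by simp
  have C: "incidence n es \<in> carrier_mat (length es) n" "incidence n es' \<in> carrier_mat (length es) n"
    using inc_carrier[of n es] inc_carrier[of n es'] len by auto
  show ?thesis
  proof (rule eq_matI)
    fix i j assume "i < dim_row (lap n es)" "j < dim_col (lap n es)"
    then have ij: "i < n" "j < n" by auto
    have eq: "\<And>E. E \<in> carrier_mat (length es) n \<Longrightarrow>
       (transpose_mat E * E) $$ (i,j) = (\<Sum>e\<in>{0..<length es}. E $$ (e,i) * E $$ (e,j))"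
      using ij by (auto simp: scalar_prod_def)
    have "(\<Sum>e\<in>{0..<length es}. incidence n es' $$ (e,i) * incidence n es' $$ (e,j)) =
          (\<Sum>e\<in>{0..<length es}. incidence n es $$ (e,i) * incidence n es $$ (e,j))"
      by (rule sum.cong, simp, auto simp: orient_entry[OF s o] ij)
    then show "lap n es' $$ (i,j) = lap n es $$ (i,j)"
      unfolding lap_def using eq[OF C(1)] eq[OF C(2)] by simp
  qed auto
qed

lemma orient_ptdf:
  assumes s: "simple_graph n es" and o: "is_orientation_of es' es" and e: "e < length es"
    and P: "pinv (lap n es) \<in> carrier_mat n n" and d: "d \<in> carrier_vec n"
  shows "(ptdf n es' *\<^sub>v d) $ e = (if es'!e = es!e then 1 else -1) * (ptdf n es *\<^sub>v d) $ e"
proof -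
  have len: "length es' = length es" using o unfolding is_orientation_of_def by simp
  define P where "P = pinv (lap n es)"
  define w where "w = P *\<^sub>v d"
  have Pc: "P \<in> carrier_mat n n" using P unfolding P_def .
  have wc: "w \<in> carrier_vec n" unfolding w_def using Pc d by simp
  have gen: "(ptdf n F *\<^sub>v d) $ e = (\<Sum>i\<in>{0..<n}. incidence n F $$ (e,i) * w $ i)"
    if F: "length F = length es" "lap n F = lap n es" for F
  proof -
    have CF: "incidence n F \<in> carrier_mat (length es) n" using inc_carrier[of n F] F by simp
    have "ptdf n F = incidence n F * P"
      by (simp only: ptdf_def Let_def P_def lap_def[symmetric] F(2))
    then have "ptdf n F *\<^sub>v d = incidence n F *\<^sub>v w"
      unfolding w_def using CF Pc d by simp
    then show ?thesis using CF e wc by (simp add: scalar_prod_def)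
  qed
  show ?thesis
    unfolding gen[OF len orient_lap[OF s o]] gen[OF refl refl]
    by (simp add: sum_distrib_left orient_entry[OF s o e] mult.assoc)
qed

lemma ptdf_lin:
  assumes P: "pinv (lap n es) \<in> carrier_mat n n" and u: "u \<in> carrier_vec n" and g: "g \<in> carrier_vec n"
    and e: "e < length es"
  shows "(ptdf n es *\<^sub>v (u + t \<cdot>\<^sub>v g)) $ e = (ptdf n es *\<^sub>v u) $ e + t * (ptdf n es *\<^sub>v g) $ e"
proof -
  have C: "incidence n es \<in> carrier_mat (length es) n" by (rule inc_carrier)
  have V: "ptdf n es \<in> carrier_mat (length es) n"
    unfolding ptdf_def Let_def lap_def[symmetric] using C P by simp
  have "ptdf n es *\<^sub>v (u + t \<cdot>\<^sub>v g) = ptdf n es *\<^sub>v u + ptdf n es *\<^sub>v (t \<cdot>\<^sub>v g)"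
    using mult_add_distrib_mat_vec[OF V u, of "t \<cdot>\<^sub>v g"] g by simp
  also have "ptdf n es *\<^sub>v (t \<cdot>\<^sub>v g) = t \<cdot>\<^sub>v (ptdf n es *\<^sub>v g)" by (rule mult_mat_vec[OF V g])
  finally show ?thesis using V e by simp
qed


lemma small_eps:
  fixes a b eps e0 :: real
  assumes "a \<noteq> 0" "0 \<le> eps" "eps \<le> e0" "e0 \<le> \<bar>a\<bar> / (\<bar>b\<bar> + 1)"
  shows "eps * \<bar>b\<bar> \<le> \<bar>a\<bar>"
proof -
  have p: "\<bar>b\<bar> + 1 > 0" by (simp add: add_nonneg_pos)
  have "e0 * (\<bar>b\<bar> + 1) \<le> \<bar>a\<bar>" using assms(4) p by (simp add: le_divide_eq)
  moreover have "eps * (\<bar>b\<bar> + 1) \<le> e0 * (\<bar>b\<bar> + 1)" using assms p by (simp add: mult_right_mono)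
  ultimately have "eps * (\<bar>b\<bar> + 1) \<le> \<bar>a\<bar>" by linarith
  moreover have "eps * \<bar>b\<bar> \<le> eps * (\<bar>b\<bar> + 1)" using assms by (simp add: mult_left_mono)
  ultimately show ?thesis by linarith
qed

theorem mainTheorem2:
  fixes n :: nat and es :: "(nat \<times> nat) list" and \<gamma> :: "real vec"
  assumes "simple_graph n es"
    and "connected_graph n es"
    and "\<gamma> \<in> Gamma n"
  shows "\<exists>es'. is_orientation_of es' es \<and>
           (\<exists>\<epsilon>0 > 0. \<forall>\<epsilon>::real. 0 \<le> \<epsilon> \<and> \<epsilon> \<le> \<epsilon>0 \<longrightarrow>
              (\<forall>e<length es'.
                 (ptdf n es' *\<^sub>v (unit_vec n 0 + \<epsilon> \<cdot>\<^sub>v \<gamma>)) $ e \<ge> 0))"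
proof -
  note s = assms(1) and c = assms(2)
  have gc: "\<gamma> \<in> carrier_vec n" using assms(3) unfolding Gamma_def by simp
  have n: "n > 0"
  proof (rule ccontr)
    assume "\<not> n > 0"
    then have "n = 0" by simp
    then show False using assms(3) unfolding Gamma_def by simp
  qed
  have P: "pinv (lap n es) \<in> carrier_mat n n" by (rule lap_pinv_carrier[OF s c n])
  have uc: "unit_vec n 0 \<in> carrier_vec n" by simp
  define a where "a k = (ptdf n es *\<^sub>v unit_vec n 0) $ k" for k
  define b where "b k = (ptdf n es *\<^sub>v \<gamma>) $ k" for k
  define keep where "keep k \<longleftrightarrow> a k > 0 \<or> (a k = 0 \<and> b k \<ge> 0)" for k
  define es' where "es' = map (\<lambda>k. if keep k then es!k else prod.swap (es!k)) [0..<length es]"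
  have len: "length es' = length es" unfolding es'_def by simp
  have o: "is_orientation_of es' es" unfolding is_orientation_of_def es'_def by auto
  define S where "S = (\<lambda>k. \<bar>a k\<bar> / (\<bar>b k\<bar> + 1)) ` {k. k < length es \<and> a k \<noteq> 0}"
  define e0 where "e0 = Min (insert 1 S)"
  have fin: "finite (insert 1 S)" unfolding S_def by simp
  have e0pos: "e0 > 0" unfolding e0_def using fin
    by (subst Min_gr_iff) (auto simp: S_def add_pos_nonneg)
  have e0S: "e0 \<le> \<bar>a k\<bar> / (\<bar>b k\<bar> + 1)" if "k < length es" "a k \<noteq> 0" for k
    unfolding e0_def using fin that by (intro Min_le) (auto simp: S_def)
  show ?thesis
  proof (intro exI conjI allI impI)
    show "is_orientation_of es' es" by (rule o)
    show "e0 > 0" by (rule e0pos)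
    fix eps :: real and e
    assume eps: "0 \<le> eps \<and> eps \<le> e0" and e: "e < length es'"
    then have e': "e < length es" using len by simp
    have dc: "unit_vec n 0 + eps \<cdot>\<^sub>v \<gamma> \<in> carrier_vec n" using gc by simp
    have val: "(ptdf n es' *\<^sub>v (unit_vec n 0 + eps \<cdot>\<^sub>v \<gamma>)) $ e =
       (if es'!e = es!e then 1 else -1) * (a e + eps * b e)"
      unfolding orient_ptdf[OF s o e' P dc] ptdf_lin[OF P uc gc e'] a_def b_def ..
    have ne: "prod.swap (es!e) \<noteq> es!e" using simple_edge[OF s e'] by (cases "es!e") auto
    have small: "eps * \<bar>b e\<bar> \<le> \<bar>a e\<bar>" if "a e \<noteq> 0"
      using small_eps[OF that, of eps e0 "b e"] eps e0S[OF e' that] by simp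
    have bnd: "- (eps * \<bar>b e\<bar>) \<le> eps * b e \<and> eps * b e \<le> eps * \<bar>b e\<bar>"
    proof -
      have ab: "\<bar>eps * b e\<bar> = eps * \<bar>b e\<bar>" using eps by (simp add: abs_mult)
      then show ?thesis using abs_ge_self[of "eps * b e"] abs_ge_minus_self[of "eps * b e"] by linarith
    qed
    show "(ptdf n es' *\<^sub>v (unit_vec n 0 + eps \<cdot>\<^sub>v \<gamma>)) $ e \<ge> 0"
    proof (cases "keep e")
      case True
      then have "es'!e = es!e" unfolding es'_def using e' by simp
      then have v: "(ptdf n es' *\<^sub>v (unit_vec n 0 + eps \<cdot>\<^sub>v \<gamma>)) $ e = a e + eps * b e" using val by simp
      show ?thesis
      proof (cases "a e = 0")
        case True then show ?thesis using v \<open>keep e\<close> eps unfolding keep_def by simp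
      next
        case False
        then have "a e > 0" using \<open>keep e\<close> unfolding keep_def by auto
        then show ?thesis using v small[OF False] bnd by simp
      qed
    next
      case False
      then have "es'!e \<noteq> es!e" unfolding es'_def using e' ne by simp
      then have v: "(ptdf n es' *\<^sub>v (unit_vec n 0 + eps \<cdot>\<^sub>v \<gamma>)) $ e = - (a e + eps * b e)" using val by simp
      show ?thesis
      proof (cases "a e = 0")
        case True then show ?thesis using v \<open>\<not> keep e\<close> eps unfolding keep_def
          by (simp add: mult_nonneg_nonpos)
      next
        case False
        then have "a e < 0" using \<open>\<not> keep e\<close> unfolding keep_def by auto
        then show ?thesis using v small[OF False] bnd by simp
      qed
    qed
  qed
qed

end
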